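(* Let $G$ be a finite impartial game that is nimber-like. Then $G\equiv *n$ for some nonnegative integer $n$.
   Context: A game is identified with its set of options (written $\{g_1,\dots,g_k\}$); $\mathbf{E}$ denotes the game with no options, and $G\equiv H$ means $G$ and $H$ have the same set of options, recursively. Nimbers: $*0\equiv\mathbf{E}$ and $*n\equiv\{*0,*1,\dots,*(n-1)\}$. A game $G$ has hereditary transitivity if whenever $g$ is an option of $G$ and $g'$ is an option of $g$, then $g'$ is (identical to) an option of $G$. A game is nimber-like if it has hereditary transitivity and each of its options is nimber-like (recursively; equivalently, $G$ and every game reachable from $G$ by a sequence of moves has hereditary transitivity). *)

theory Defs
  imports Main "HOL-Library.FSet"
begin

text \<open>Finite impartial games, identified with their (finite) set of options,
recursively. Identity of games (the relation written with three bars) is HOL equality.\<close>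
datatype game = Game (opts: "game fset")

definition E :: game where "E = Game {||}"

fun nimber :: "nat \<Rightarrow> game" where
  "nimber n = Game (fset_of_list (map nimber [0..<n]))"

definition hered_trans :: "game \<Rightarrow> bool" where
  "hered_trans G \<longleftrightarrow> (\<forall>g. g |\<in>| opts G \<longrightarrow> (\<forall>g'. g' |\<in>| opts g \<longrightarrow> g' |\<in>| opts G))"

inductive nimber_like :: "game \<Rightarrow> bool" where
  "hered_trans G \<Longrightarrow> (\<And>g. g |\<in>| opts G \<Longrightarrow> nimber_like g) \<Longrightarrow> nimber_like G"

end

theory Submission
  imports Defs
begin

lemma not_self_opt: "\<not> x |\<in>| opts x"
proof (induction x)
  case (Game fs)
  then show ?case by (metis game.sel)
qed

declare nimber.simps[simp del]

lemma opts_nimber: "x |\<in>| opts (nimber n) \<longleftrightarrow> (\<exists>a<n. x = nimber a)"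
  by (subst nimber.simps) (auto simp: fset_of_list_elem)

declare nimber.simps[simp del]

lemma nimber_inj: "nimber a = nimber b \<Longrightarrow> a = b"
proof (rule ccontr)
  assume h: "nimber a = nimber b" "a \<noteq> b"
  show False
  proof (cases "a < b")
    case True
    then have "nimber a |\<in>| opts (nimber b)" using opts_nimber by blast
    then show False using h not_self_opt by metis
  next
    case False
    then have "b < a" using h by simp
    then have "nimber b |\<in>| opts (nimber a)" using opts_nimber by blast
    then show False using h not_self_opt by metis
  qed
qed

theorem theorem3p3:
  fixes G :: game
  assumes "nimber_like G"
  shows "\<exists>n::nat. G = nimber n"
  using assms
proof (induction rule: nimber_like.induct)
  case (1 G)
  define S where "S = {a. nimber a |\<in>| opts G}"
  have fin: "finite S"
  proof -
    have "inj_on nimber S" using nimber_inj by (auto simp: inj_on_def)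
    moreover have "nimber ` S \<subseteq> fset (opts G)" by (auto simp: S_def)
    moreover have "finite (fset (opts G))" by simp
    ultimately show ?thesis by (meson finite_imageD finite_subset)
  qed
  have down: "b \<in> S" if "a \<in> S" "b < a" for a b
  proof -
    have "nimber b |\<in>| opts (nimber a)" using opts_nimber that(2) by blast
    moreover have "nimber a |\<in>| opts G" using that(1) S_def by simp
    ultimately have "nimber b |\<in>| opts G" using 1(1) unfolding hered_trans_def by blast
    then show ?thesis using S_def by simp
  qed
  obtain k where "k \<notin> S" using ex_new_if_finite[OF infinite_UNIV_nat fin] by blast
  define n where "n = (LEAST k. k \<notin> S)"
  have nS: "n \<notin> S" unfolding n_def by (rule LeastI) fact
  have Seq: "a \<in> S \<longleftrightarrow> a < n" for a
  proof
    assume "a \<in> S"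
    show "a < n"
    proof (rule ccontr)
      assume "\<not> a < n"
      then have "n = a \<or> n < a" by auto
      then show False using nS down \<open>a \<in> S\<close> by blast
    qed
  next
    assume "a < n"
    then show "a \<in> S" unfolding n_def using not_less_Least by blast
  qed
  have "opts G = opts (nimber n)"
  proof (rule fset_eqI)
    fix x
    show "x |\<in>| opts G \<longleftrightarrow> x |\<in>| opts (nimber n)"
    proof
      assume x: "x |\<in>| opts G"
      then obtain a where "x = nimber a" using 1(3) by blast
      then show "x |\<in>| opts (nimber n)" using x Seq opts_nimber S_def by auto
    next
      assume "x |\<in>| opts (nimber n)"
      then obtain a where "a < n" "x = nimber a" using opts_nimber by blast
      then show "x |\<in>| opts G" using Seq S_def by auto
    qed
  qed
  then show ?case by (metis game.expand)
qed

end
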